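(* Let $q$ be an odd prime power, $s \ge 2$, and let $E,F\subset\mathbb{F}_q^s$ satisfy $(\#E)(\#F) \ge 900q^s$. Then \[ \nu(0) \le \frac{21}{30} (\# E) (\# F). \]
   Context: $\mathbb{F}_q$ is the finite field with $q$ elements, $q$ odd. For $\mathbf{x}\in\mathbb{F}_q^s$, $|\mathbf{x}|^2=\sum_i x_i^2$. $\nu(0)=\#\{(\mathbf{x},\mathbf{y})\in E\times F: |\mathbf{x}-\mathbf{y}|^2=0\}$. *)

theory Defs
  imports "HOL-Analysis.Analysis"
begin

text \<open>Vectors in F_q^s are modelled as 'a ^ 'n, with 'a a finite field and CARD('n) = s.\<close>

definition sqnorm :: "'a::field ^ 'n \<Rightarrow> 'a" where
  "sqnorm x = (\<Sum>i\<in>UNIV. (x $ i)^2)"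

definition nu :: "('a::field ^ 'n) set \<Rightarrow> ('a ^ 'n) set \<Rightarrow> 'a \<Rightarrow> nat" where
  "nu E F t = card {(x, y). x \<in> E \<and> y \<in> F \<and> sqnorm (x - y) = t}"

end

theory Submission
  imports Defs "HOL-Number_Theory.Residues"
begin

definition dotp :: "'a::field ^ 'n \<Rightarrow> 'a ^ 'n \<Rightarrow> 'a" where
  "dotp x y = (\<Sum>i\<in>UNIV. x $ i * y $ i)"

lemma sqnorm_diff: "sqnorm (x - y) = sqnorm x - 2 * dotp x y + sqnorm (y :: 'a::field^'n)"
  unfolding sqnorm_def dotp_def
  by (simp add: power2_eq_square algebra_simps sum.distrib sum_subtractf sum_distrib_left)

lemma dotp_add_right: "dotp x (a + b) = dotp x a + dotp (x :: 'a::field^'n) b"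
  unfolding dotp_def by (simp add: algebra_simps sum.distrib)

lemma dotp_diff_right: "dotp x (a - b) = dotp x a - dotp (x :: 'a::field^'n) b"
  unfolding dotp_def by (simp add: algebra_simps sum_subtractf)

lemma dotp_add_left: "dotp (x + a) d = dotp x d + dotp (a :: 'a::field^'n) d"
  unfolding dotp_def by (simp add: algebra_simps sum.distrib)

lemma dotp_axis: "dotp (axis i t) d = t * (d $ i :: 'a::field)"
proof -
  have "(\<Sum>j\<in>UNIV. (if j = i then t else 0) * d$j) = (\<Sum>j\<in>UNIV. if j = i then t * d$j else 0)" by (rule sum.cong) auto
  then show ?thesis unfolding dotp_def axis_def by simp
qed

lemma two_ne_zero_field:
  assumes "odd CARD('a::{field,finite})"
  shows "(2::'a) \<noteq> 0"
proof
  assume h: "(2::'a) = 0"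
  have "of_nat 2 = (0::'a)" using h by simp
  then have "CHAR('a) dvd 2" by (simp only: of_nat_eq_0_iff_char_dvd)
  moreover have "CHAR('a) \<noteq> 1" by (metis CHAR_dvd_CARD dvd_refl one_neq_zero of_nat_1 of_nat_eq_0_iff_char_dvd)
  ultimately have "CHAR('a) dvd CARD('a) \<and> CHAR('a) = 2"
    using CHAR_dvd_CARD[where 'a='a] by (metis dvd_refl nat_dvd_1_iff_1 prime_nat_iff two_is_prime_nat)
  then show False using assms by auto
qed

lemma card_filter_real: "finite A \<Longrightarrow> real (card {x\<in>A. P x}) = (\<Sum>x\<in>A. if P x then 1 else 0)"
  by (simp add: sum.inter_filter[symmetric])

lemma hyper_card:
  fixes d :: "'a::{field,finite}^'n"
  assumes "d \<noteq> 0"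
  shows "real (card {x. dotp x d = b}) * real CARD('a) = real CARD('a) ^ CARD('n)"
proof -
  obtain i where di: "d $ i \<noteq> 0" using assms by (metis vec_eq_iff zero_index)
  define S where "S c = {x. dotp x d = c}" for c
  have eqc: "card (S c) = card (S 0)" for c
  proof -
    define a where "a = axis i (c / d $ i)"
    define a' where "a' = axis i (- (c / d $ i))"
    have da: "dotp a d = c" unfolding a_def dotp_axis using di by simp
    have da': "dotp a' d = - c" unfolding a'_def dotp_axis using di by simp
    have aa: "z + a' + a = z" for z unfolding a_def a'_def
      by (simp add: vec_eq_iff axis_def)
    have "(\<lambda>x. x + a) ` S 0 = S c"
    proof (intro Set.set_eqI iffI)
      fix z assume "z \<in> (\<lambda>x. x + a) ` S 0"
      then show "z \<in> S c" using da by (auto simp: S_def dotp_add_left)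
    next
      fix z assume z: "z \<in> S c"
      have "z + a' \<in> S 0"
        using z da' by (simp add: S_def dotp_add_left)
      moreover have "z = z + a' + a" using aa by simp
      ultimately show "z \<in> (\<lambda>x. x + a) ` S 0" by blast
    qed
    moreover have "inj_on (\<lambda>x. x + a) (S 0)" by (auto intro: inj_onI)
    ultimately show ?thesis by (metis card_image)
  qed
  have "real CARD('a) ^ CARD('n) = (\<Sum>x\<in>(UNIV::('a^'n) set). 1)" by simp
  also have "\<dots> = (\<Sum>x\<in>(UNIV::('a^'n) set). \<Sum>c\<in>UNIV. if dotp x d = c then 1 else 0)"
    by (intro sum.cong refl) (simp add: sum.delta)
  also have "\<dots> = (\<Sum>c\<in>UNIV. \<Sum>x\<in>(UNIV::('a^'n) set). if dotp x d = c then 1 else 0)"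
    by (rule sum.swap)
  also have "\<dots> = (\<Sum>c\<in>(UNIV::'a set). real (card (S c)))"
    by (intro sum.cong refl) (simp add: S_def card_filter_real[where A=UNIV, simplified])
  also have "\<dots> = (\<Sum>c\<in>(UNIV::'a set). real (card (S b)))"
    by (rule sum.cong[OF refl]) (metis eqc)
  finally show ?thesis by (simp add: S_def)
qed

lemma eq_aux: "((a::'a::ab_group_add) - b + c = 0) \<longleftrightarrow> (b - c = a)"
  by (metis diff_add_eq diff_eq_eq right_minus_eq)

lemma sum_ind_prod:
  fixes a b :: "'a::finite"
  shows "(\<Sum>c\<in>UNIV. (if a = c then 1 else 0) * (if b = c then 1 else (0::real))) = (if a = b then 1 else 0)"
proof -
  have "(\<Sum>c\<in>UNIV. (if a = c then 1 else 0) * (if b = c then 1 else (0::real)))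
      = (\<Sum>c\<in>UNIV. if a = c then (if b = a then 1 else 0) else (0::real))"
    by (intro sum.cong refl) auto
  also have "\<dots> = (if a = b then 1 else 0)" by (simp add: sum.delta)
  finally show ?thesis .
qed

lemma card_ge3:
  assumes "odd CARD('a::{field,finite})"
  shows "CARD('a) \<ge> 3"
proof -
  have "card {0::'a, 1} = 2" by simp
  moreover have "card {0::'a, 1} \<le> CARD('a)" by (rule card_mono) auto
  ultimately have "CARD('a) \<ge> 2" by simp
  moreover have "CARD('a) \<noteq> 2" using assms by auto
  ultimately show ?thesis by simp
qed

theorem lemma6:
  fixes E F :: "('a::{field,finite} ^ 'n) set"
  assumes "odd CARD('a)"
    and "CARD('n) \<ge> 2"
    and "real (card E) * real (card F) \<ge> 900 * real CARD('a) ^ CARD('n)"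
  shows "real (nu E F 0) \<le> 21 / 30 * real (card E) * real (card F)"
proof -
  define q where "q = real CARD('a)"
  define N where "N = real CARD('a) ^ CARD('n)"
  define eE where "eE = real (card E)"
  define fF where "fF = real (card F)"
  define f where "f x y = 2 * dotp x y - sqnorm y" for x y :: "'a^'n"
  define n where "n x c = (\<Sum>y\<in>F. if f x y = c then 1 else (0::real))" for x c
  have finE: "finite E" and finF: "finite F" by auto
  have q3: "q \<ge> 3" using card_ge3[OF assms(1)] unfolding q_def by simp
  have two: "(2::'a) \<noteq> 0" using two_ne_zero_field[OF assms(1)] .
  have N0: "N \<ge> 0" unfolding N_def by simp
  have sumN: "(\<Sum>x\<in>(UNIV::('a^'n) set). (1::real)) = N" unfolding N_def by simp
  have sumq: "(\<Sum>c\<in>(UNIV::'a set). (1::real)) = q" unfolding q_def by simp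
  have setA: "{(x, y). x \<in> E \<and> y \<in> F \<and> sqnorm (x - y) = 0} = Sigma E (\<lambda>x. {y\<in>F. f x y = sqnorm x})"
    by (auto simp: f_def sqnorm_diff eq_aux)
  have A: "real (nu E F 0) = (\<Sum>x\<in>E. n x (sqnorm x))"
  proof -
    have "nu E F 0 = (\<Sum>x\<in>E. card {y\<in>F. f x y = sqnorm x})"
      unfolding nu_def setA by (simp add: card_SigmaI)
    then show ?thesis unfolding n_def by (simp add: card_filter_real)
  qed
  have B: "(\<Sum>c\<in>UNIV. n x c) = fF" for x
  proof -
    have "(\<Sum>c\<in>UNIV. n x c) = (\<Sum>y\<in>F. \<Sum>c\<in>UNIV. if f x y = c then 1 else (0::real))"
      unfolding n_def by (rule sum.swap)
    also have "\<dots> = (\<Sum>y\<in>F. 1)" by (intro sum.cong refl) (simp add: sum.delta)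
    finally show ?thesis unfolding fF_def by simp
  qed
  have C: "(\<Sum>x\<in>UNIV. \<Sum>c\<in>UNIV. (n x c)^2)
      = (\<Sum>y\<in>F. \<Sum>y'\<in>F. \<Sum>x\<in>UNIV. if f x y = f x y' then 1 else (0::real))"
  proof -
    have "(\<Sum>c\<in>UNIV. (n x c)^2) = (\<Sum>y\<in>F. \<Sum>y'\<in>F. if f x y = f x y' then 1 else (0::real))" for x
    proof -
      have "(\<Sum>c\<in>UNIV. (n x c)^2) = (\<Sum>c\<in>UNIV. \<Sum>y\<in>F. \<Sum>y'\<in>F.
          (if f x y = c then 1 else 0) * (if f x y' = c then 1 else (0::real)))"
        unfolding n_def power2_eq_square by (simp add: sum_product)
      also have "\<dots> = (\<Sum>y\<in>F. \<Sum>c\<in>UNIV. \<Sum>y'\<in>F.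
          (if f x y = c then 1 else 0) * (if f x y' = c then 1 else (0::real)))"
        by (rule sum.swap)
      also have "\<dots> = (\<Sum>y\<in>F. \<Sum>y'\<in>F. \<Sum>c\<in>UNIV.
          (if f x y = c then 1 else 0) * (if f x y' = c then 1 else (0::real)))"
        by (intro sum.cong refl) (rule sum.swap)
      also have "\<dots> = (\<Sum>y\<in>F. \<Sum>y'\<in>F. if f x y = f x y' then 1 else (0::real))"
        by (intro sum.cong refl) (rule sum_ind_prod)
      finally show ?thesis .
    qed
    then have "(\<Sum>x\<in>UNIV. \<Sum>c\<in>UNIV. (n x c)^2)
        = (\<Sum>x\<in>UNIV. \<Sum>y\<in>F. \<Sum>y'\<in>F. if f x y = f x y' then 1 else (0::real))"
      by simp
    also have "\<dots> = (\<Sum>y\<in>F. \<Sum>x\<in>UNIV. \<Sum>y'\<in>F. if f x y = f x y' then 1 else (0::real))"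
      by (rule sum.swap)
    also have "\<dots> = (\<Sum>y\<in>F. \<Sum>y'\<in>F. \<Sum>x\<in>UNIV. if f x y = f x y' then 1 else (0::real))"
      by (rule sum.cong[OF refl], rule sum.swap)
    finally show ?thesis .
  qed
  have D: "(\<Sum>x\<in>UNIV. if f x y = f x y' then 1 else (0::real)) \<le> N / q + (if y = y' then N else 0)"
    for y y'
  proof (cases "y = y'")
    case True
    then show ?thesis using sumN N0 q3 by simp
  next
    case False
    define d where "d = (y - y') + (y - y')"
    obtain i where i: "y $ i \<noteq> y' $ i" using False by (metis vec_eq_iff)
    have "d $ i = 2 * (y $ i - y' $ i)" unfolding d_def by simp
    then have "d $ i \<noteq> 0" using i two by simp
    then have d0: "d \<noteq> 0" by (metis zero_index)
    have iff: "f x y = f x y' \<longleftrightarrow> dotp x d = sqnorm y - sqnorm y'" for x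
    proof -
      have "dotp x d = 2 * dotp x y - 2 * dotp x y'"
        unfolding d_def dotp_add_right dotp_diff_right by (simp add: algebra_simps)
      then show ?thesis unfolding f_def
        by (metis (no_types, lifting) add_diff_cancel_left' diff_add_cancel diff_diff_eq2 diff_eq_eq)
    qed
    have "(\<Sum>x\<in>UNIV. if f x y = f x y' then 1 else (0::real))
        = real (card {x. dotp x d = sqnorm y - sqnorm y'})"
      using card_filter_real[where A="UNIV::('a^'n) set" and P="\<lambda>x. dotp x d = sqnorm y - sqnorm y'"]
      by (simp add: iff)
    also have "\<dots> = N / q"
      using hyper_card[OF d0, of "sqnorm y - sqnorm y'"] q3 unfolding N_def q_def
      by (simp add: field_simps)
    finally show ?thesis using False by simp
  qed
  have CD: "(\<Sum>x\<in>UNIV. \<Sum>c\<in>UNIV. (n x c)^2) \<le> fF * fF * N / q + fF * N"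
  proof -
    have "(\<Sum>x\<in>UNIV. \<Sum>c\<in>UNIV. (n x c)^2)
        \<le> (\<Sum>y\<in>F. \<Sum>y'\<in>F. N / q + (if y = y' then N else 0))"
      unfolding C by (intro sum_mono D)
    also have "\<dots> = (\<Sum>y\<in>F. fF * (N / q) + N)"
      using finF by (intro sum.cong refl) (simp add: sum.distrib fF_def sum.delta)
    also have "\<dots> = fF * fF * N / q + fF * N"
      by (simp add: fF_def algebra_simps)
    finally show ?thesis .
  qed
  have E: "(\<Sum>x\<in>UNIV. \<Sum>c\<in>UNIV. (n x c - fF / q)^2) \<le> fF * N"
  proof -
    have "(\<Sum>x\<in>UNIV. \<Sum>c\<in>UNIV. (n x c - fF / q)^2)
       = (\<Sum>x\<in>UNIV. \<Sum>c\<in>UNIV. (n x c)^2) - 2 * (fF / q) * (\<Sum>x\<in>(UNIV::('a^'n) set). \<Sum>c\<in>UNIV. n x c)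
         + (\<Sum>x\<in>(UNIV::('a^'n) set). \<Sum>c\<in>(UNIV::'a set). (fF / q)^2)"
      by (simp add: power2_diff sum.distrib sum_subtractf sum_distrib_left sum_divide_distrib mult_ac)
    also have "(\<Sum>x\<in>(UNIV::('a^'n) set). \<Sum>c\<in>UNIV. n x c) = N * fF"
      using B sumN by simp
    also have "(\<Sum>x\<in>(UNIV::('a^'n) set). \<Sum>c\<in>(UNIV::'a set). (fF / q)^2) = N * q * (fF / q)^2"
      using sumN sumq by simp
    finally have "(\<Sum>x\<in>UNIV. \<Sum>c\<in>UNIV. (n x c - fF / q)^2)
        = (\<Sum>x\<in>UNIV. \<Sum>c\<in>UNIV. (n x c)^2) - fF * fF * N / q"
      using q3 by (simp add: power2_eq_square field_simps)
    then show ?thesis using CD by simp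
  qed
  have F1: "(\<Sum>x\<in>E. (n x (sqnorm x) - fF / q)^2) \<le> (\<Sum>x\<in>UNIV. \<Sum>c\<in>UNIV. (n x c - fF / q)^2)"
  proof -
    have "(\<Sum>x\<in>E. (n x (sqnorm x) - fF / q)^2) \<le> (\<Sum>x\<in>E. \<Sum>c\<in>UNIV. (n x c - fF / q)^2)"
      by (intro sum_mono member_le_sum) auto
    also have "\<dots> \<le> (\<Sum>x\<in>UNIV. \<Sum>c\<in>UNIV. (n x c - fF / q)^2)"
      by (intro sum_mono2) (auto intro: sum_nonneg)
    finally show ?thesis .
  qed
  define Dv where "Dv = real (nu E F 0) - eE * fF / q"
  have Dv_eq: "Dv = (\<Sum>x\<in>E. (n x (sqnorm x) - fF / q))"
    unfolding Dv_def A by (simp add: sum_subtractf eE_def)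
  have "Dv^2 \<le> (\<Sum>x\<in>E. (n x (sqnorm x) - fF / q)^2) * eE"
    unfolding Dv_eq eE_def by (rule sum_squared_le_sum_of_squares)
  also have "\<dots> \<le> fF * N * eE"
    using F1 E unfolding eE_def by (intro mult_right_mono) auto
  finally have Dsq: "Dv^2 \<le> eE * fF * N" by (simp add: algebra_simps)
  have big: "eE * fF \<ge> 900 * N" using assms(3) unfolding eE_def fF_def N_def by simp
  have ef0: "eE * fF \<ge> 0" unfolding eE_def fF_def by simp
  have Dle: "Dv \<le> eE * fF / 30"
  proof (cases "Dv \<le> 0")
    case True then show ?thesis using ef0 by simp
  next
    case False
    have "eE * fF * N \<le> eE * fF * (eE * fF / 900)"
      using big ef0 by (intro mult_left_mono) auto
    moreover have "(eE * fF / 30)^2 = eE * fF * (eE * fF / 900)" by (simp add: power2_eq_square)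
    ultimately have h: "Dv^2 \<le> (eE * fF / 30)^2" using Dsq by linarith
    have "0 \<le> eE * fF / 30" using ef0 by simp
    then show ?thesis by (rule power2_le_imp_le[OF h])
  qed
  have "eE * fF / q \<le> eE * fF / 3" using q3 ef0 by (intro divide_left_mono) auto
  then have "real (nu E F 0) \<le> eE * fF / 3 + eE * fF / 30" using Dle unfolding Dv_def by simp
  also have "\<dots> \<le> 21 / 30 * eE * fF" using ef0 by simp
  finally show ?thesis unfolding eE_def fF_def .
qed

end
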